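(* Let $r\ge4$, $l\ge r$, $k,\alpha,\beta\in\mathbb N$ with $\alpha+\beta+k(r-2)\equiv0\pmod l$ and $\gcd(k,\alpha,l)=\gcd(k,\beta,l)=1$; let $N_G=\mathbb Z^r+\mathbb Z\frac1l(k,\ldots,k,\alpha,\beta)^{\intercal}\subset\mathbb R^r$ ($k$ repeated $r-2$ times), $\mathfrak L=\{x\in\mathbb R^r:x_1=\cdots=x_{r-2}\}$ and $\overline{N_G}=N_G\cap\mathfrak L$. Let $n_1,n_2,n_3\in\overline{N_G}\setminus\{\mathbf 0\}$ be such that $\mathrm{pos}(n_1,n_2,n_3)$ is a $3$-dimensional basic cone w.r.t. $\overline{N_G}$. Then for every tuple of integers $1\le\xi_1<\xi_2<\cdots<\xi_{r-3}\le r-2$ the cone $\mathrm{pos}(n_1,n_2,n_3,e_{\xi_1},\ldots,e_{\xi_{r-3}})\subset\mathbb R^r$ is basic w.r.t. the lattice $N_G$.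
   Context: $e_1,\ldots,e_r$ are the standard unit vectors of $\mathbb R^r$. A simplicial cone generated by primitive lattice vectors is basic w.r.t. a lattice $N$ if its minimal generators form part of a $\mathbb Z$-basis of $N$ (here: a $\mathbb Z$-basis of $\overline{N_G}$, resp. of $N_G$). *)

theory Defs
  imports Complex_Main
begin

text \<open>Vectors of R^r are represented as functions nat => real, with coordinates
  indexed by 1..r (and value 0 outside {1..r}, enforced by lattice membership).\<close>

type_synonym rvec = "nat \<Rightarrow> real"

definition unitv :: "nat \<Rightarrow> rvec" where
  "unitv i = (\<lambda>j. if j = i then 1 else 0)"

definition gen_vec :: "nat \<Rightarrow> nat \<Rightarrow> nat \<Rightarrow> nat \<Rightarrow> nat \<Rightarrow> real" where
  "gen_vec r k \<alpha> \<beta> j = (if j \<le> r - 2 then real k else if j = r - 1 then real \<alpha> else real \<beta>)"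

definition NG :: "nat \<Rightarrow> nat \<Rightarrow> nat \<Rightarrow> nat \<Rightarrow> nat \<Rightarrow> rvec set" where
  "NG r l k \<alpha> \<beta> = {x. \<exists>(z::nat \<Rightarrow> int) (m::int). \<forall>j.
      x j = (if j \<in> {1..r} then of_int (z j) + of_int m * gen_vec r k \<alpha> \<beta> j / real l else 0)}"

definition Lsp :: "nat \<Rightarrow> rvec set" where
  "Lsp r = {x. \<forall>i\<in>{1..r-2}. \<forall>j\<in>{1..r-2}. x i = x j}"

definition NGbar :: "nat \<Rightarrow> nat \<Rightarrow> nat \<Rightarrow> nat \<Rightarrow> nat \<Rightarrow> rvec set" where
  "NGbar r l k \<alpha> \<beta> = NG r l k \<alpha> \<beta> \<inter> Lsp r"

definition pos_hull :: "rvec list \<Rightarrow> rvec set" where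
  "pos_hull vs = {x. \<exists>c::nat \<Rightarrow> real. (\<forall>i<length vs. c i \<ge> 0) \<and>
      x = (\<lambda>j. \<Sum>i<length vs. c i * (vs ! i) j)}"

definition real_lin_indep :: "rvec list \<Rightarrow> bool" where
  "real_lin_indep vs \<longleftrightarrow> (\<forall>c::nat \<Rightarrow> real.
      (\<lambda>j. \<Sum>i<length vs. c i * (vs ! i) j) = (\<lambda>_. 0) \<longrightarrow> (\<forall>i<length vs. c i = 0))"

definition int_comb :: "rvec list \<Rightarrow> (nat \<Rightarrow> int) \<Rightarrow> rvec" where
  "int_comb bs c = (\<lambda>j. \<Sum>i<length bs. of_int (c i) * (bs ! i) j)"

definition zbasis :: "rvec set \<Rightarrow> rvec list \<Rightarrow> bool" where
  "zbasis N bs \<longleftrightarrow> set bs \<subseteq> N \<and> (\<forall>x\<in>N. \<exists>c. x = int_comb bs c) \<and>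
     (\<forall>c. int_comb bs c = (\<lambda>_. 0) \<longrightarrow> (\<forall>i<length bs. c i = 0))"

definition primitive :: "rvec set \<Rightarrow> rvec \<Rightarrow> bool" where
  "primitive N v \<longleftrightarrow> v \<in> N \<and> v \<noteq> (\<lambda>_. 0) \<and>
     (\<forall>w\<in>N. \<forall>m::nat. v = (\<lambda>j. real m * w j) \<longrightarrow> m = 1)"

definition basic_cone_dim :: "rvec set \<Rightarrow> nat \<Rightarrow> rvec list \<Rightarrow> bool" where
  "basic_cone_dim N d vs \<longleftrightarrow> (\<exists>us. length us = d \<and> pos_hull us = pos_hull vs \<and>
      real_lin_indep us \<and> (\<forall>u\<in>set us. primitive N u) \<and>
      (\<exists>bs. zbasis N (us @ bs)))"

definition basic_cone :: "rvec set \<Rightarrow> rvec list \<Rightarrow> bool" where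
  "basic_cone N vs \<longleftrightarrow> (\<exists>d. basic_cone_dim N d vs)"

end

theory Submission
  imports Defs
begin

lemma sum_split: "(\<Sum>i<a+b. f i) = (\<Sum>i<a. f i) + (\<Sum>i<b. f (a+i)) " for f :: "nat \<Rightarrow> real"
proof -
  have "(\<Sum>i<a+b. f i) = (\<Sum>i\<in>{0..<a+b}. f i)" by (simp add: atLeast0LessThan)
  also have "\<dots> = (\<Sum>i\<in>{0..<a}. f i) + (\<Sum>i\<in>{a..<a+b}. f i)" by (rule sum.atLeastLessThan_concat[symmetric]) auto
  also have "(\<Sum>i\<in>{a..<a+b}. f i) = (\<Sum>i<b. f (a+i))"
    using sum.shift_bounds_nat_ivl[of f 0 a b] by (simp add: atLeast0LessThan add.commute)
  finally show ?thesis by (simp add: atLeast0LessThan)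
qed

definition lc :: "rvec list \<Rightarrow> (nat \<Rightarrow> real) \<Rightarrow> rvec" where
  "lc xs c = (\<lambda>j. \<Sum>i<length xs. c i * (xs!i) j)"

lemma lc_append: "lc (xs@ys) c = (\<lambda>j. lc xs c j + lc ys (\<lambda>i. c (length xs + i)) j)"
  unfolding lc_def by (auto simp: sum_split nth_append)

lemma lc_cong: "(\<And>i. i < length xs \<Longrightarrow> c i = d i) \<Longrightarrow> lc xs c = lc xs d"
  unfolding lc_def by (auto intro!: sum.cong)

lemma int_comb_lc: "int_comb xs c = lc xs (\<lambda>i. of_int (c i))"
  unfolding int_comb_def lc_def by simp

lemma pos_hull_lc: "pos_hull xs = {lc xs c | c. \<forall>i<length xs. c i \<ge> 0}"
  unfolding pos_hull_def lc_def by auto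

lemma pos_hull_append:
  "pos_hull (xs@ys) = {(\<lambda>j. a j + b j) | a b. a \<in> pos_hull xs \<and> b \<in> pos_hull ys}"
proof (intro equalityI subsetI)
  fix x assume "x \<in> pos_hull (xs@ys)"
  then obtain c where c: "\<forall>i<length (xs@ys). c i \<ge> 0" "x = lc (xs@ys) c"
    unfolding pos_hull_lc by auto
  have "lc xs c \<in> pos_hull xs" using c(1) unfolding pos_hull_lc by auto
  moreover have "lc ys (\<lambda>i. c (length xs + i)) \<in> pos_hull ys" using c(1) unfolding pos_hull_lc by auto
  ultimately show "x \<in> {(\<lambda>j. a j + b j) | a b. a \<in> pos_hull xs \<and> b \<in> pos_hull ys}"
    using c(2) lc_append by blast
next
  fix x assume "x \<in> {(\<lambda>j. a j + b j) | a b. a \<in> pos_hull xs \<and> b \<in> pos_hull ys}"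
  then obtain c d where cd: "\<forall>i<length xs. c i \<ge> 0" "\<forall>i<length ys. d i \<ge> 0"
    "x = (\<lambda>j. lc xs c j + lc ys d j)"
    unfolding pos_hull_lc by blast
  define e where "e i = (if i < length xs then c i else d (i - length xs))" for i
  have "lc xs e = lc xs c" by (rule lc_cong) (simp add: e_def)
  moreover have "lc ys (\<lambda>i. e (length xs + i)) = lc ys d" by (rule lc_cong) (simp add: e_def)
  moreover have "\<forall>i<length (xs@ys). e i \<ge> 0" using cd by (auto simp: e_def)
  ultimately show "x \<in> pos_hull (xs@ys)" unfolding pos_hull_lc using cd(3) lc_append[of xs ys e]
    by (auto intro!: exI[of _ e])
qed

lemma lc_unitv_at:
  assumes "distinct xs" "i < length xs"
  shows "lc (map unitv xs) d (xs!i) = d i"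
proof -
  have "lc (map unitv xs) d (xs!i) = (\<Sum>i'<length xs. if i = i' then d i' else 0)"
    unfolding lc_def unitv_def using assms by (intro sum.cong) (auto simp: nth_eq_iff_index_eq)
  then show ?thesis using assms by simp
qed

lemma lc_unitv_out:
  assumes "j \<notin> set xs"
  shows "lc (map unitv xs) d j = 0"
  unfolding lc_def unitv_def using assms by (auto intro!: sum.neutral)

lemma lc_in_L: "set xs \<subseteq> Lsp r \<Longrightarrow> lc xs c \<in> Lsp r"
  unfolding Lsp_def
proof (intro CollectI ballI)
  fix i j assume xs: "set xs \<subseteq> {x. \<forall>i\<in>{1..r - 2}. \<forall>j\<in>{1..r - 2}. x i = x j}"
    and i: "i \<in> {1..r-2}" and j: "j \<in> {1..r-2}"
  have "\<And>t. t < length xs \<Longrightarrow> (xs!t) i = (xs!t) j"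
  proof -
    fix t assume "t < length xs"
    then have "xs!t \<in> set xs" by simp
    then show "(xs!t) i = (xs!t) j" using xs i j by blast
  qed
  then show "lc xs c i = lc xs c j" unfolding lc_def by (intro sum.cong) auto
qed

lemma E_kill:
  assumes "v \<in> Lsp r" "m \<in> {1..r-2}" "m \<notin> set xs" "set xs \<subseteq> {1..r-2}" "distinct xs"
    and "\<And>j. v j + lc (map unitv xs) d j = 0"
  shows "\<forall>i<length xs. d i = 0"
proof (intro allI impI)
  fix i assume i: "i < length xs"
  have "v m = 0" using assms(6)[of m] lc_unitv_out[OF assms(3)] by simp
  moreover have "xs!i \<in> {1..r-2}" using assms(4) i nth_mem by blast
  moreover have "v (xs!i) = v m" using assms(1,2) calculation(2) unfolding Lsp_def by blast
  ultimately show "d i = 0" using assms(6)[of "xs!i"] lc_unitv_at[OF assms(5) i] by simp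
qed

lemma int_comb_delta: "i < length bs \<Longrightarrow> int_comb bs (\<lambda>j. if j = i then 1 else 0) = bs!i"
proof -
  assume i: "i < length bs"
  have "int_comb bs (\<lambda>j. if j = i then 1 else 0) = (\<lambda>x. \<Sum>j<length bs. if j = i then (bs!j) x else 0)"
    unfolding int_comb_def by (intro ext sum.cong) auto
  then show ?thesis using i by simp
qed

lemma zbasis_primitive:
  assumes "zbasis N bs" "i < length bs"
  shows "primitive N (bs!i)"
  unfolding primitive_def
proof (intro conjI ballI allI impI)
  have ind: "\<And>c. int_comb bs c = (\<lambda>_. 0) \<Longrightarrow> c i = 0" using assms unfolding zbasis_def by blast
  show "bs!i \<in> N" using assms unfolding zbasis_def by auto
  show "bs!i \<noteq> (\<lambda>_. 0)"
  proof
    assume "bs!i = (\<lambda>_. 0)"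
    then have "int_comb bs (\<lambda>j. if j = i then 1 else 0) = (\<lambda>_. 0)" using int_comb_delta[OF assms(2)] by simp
    from ind[OF this] show False by simp
  qed
next
  fix w m assume w: "w \<in> N" and m: "bs!i = (\<lambda>j. real m * w j)"
  have ind: "\<And>c. int_comb bs c = (\<lambda>_. 0) \<Longrightarrow> c i = 0" using assms unfolding zbasis_def by blast
  obtain c where c: "w = int_comb bs c" using w assms(1) unfolding zbasis_def by auto
  have d: "(\<Sum>j<length bs. of_int (if j = i then 1 else 0) * (bs!j) x) = (bs!i) x" for x
    using fun_cong[OF int_comb_delta[OF assms(2)], of x] unfolding int_comb_def by simp
  have e: "int_comb bs (\<lambda>j. int m * c j - (if j = i then 1 else 0)) x = real m * w x - (bs!i) x" for x
  proof -
    have "int_comb bs (\<lambda>j. int m * c j - (if j = i then 1 else 0)) x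
       = (\<Sum>j<length bs. real m * (of_int (c j) * (bs!j) x)) - (\<Sum>j<length bs. of_int (if j = i then 1 else 0) * (bs!j) x)"
      unfolding int_comb_def by (simp add: sum_subtractf[symmetric] algebra_simps)
    also have "\<dots> = real m * w x - (bs!i) x" using d unfolding c int_comb_def by (simp add: sum_distrib_left)
    finally show ?thesis .
  qed
  have "int_comb bs (\<lambda>j. int m * c j - (if j = i then 1 else 0)) = (\<lambda>_. 0)"
    using e m by (intro ext) simp
  from ind[OF this] have "int m * c i = 1" by simp
  then show "m = 1" by (simp add: zmult_eq_1_iff)
qed

lemma lc_zero: "lc xs (\<lambda>_. 0) = (\<lambda>_. 0)"
  unfolding lc_def by simp

lemma unitv_NG: "i \<in> {1..r} \<Longrightarrow> unitv i \<in> NG r l k \<alpha> \<beta>"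
  unfolding NG_def
  by (rule CollectI, rule exI[of _ "\<lambda>j. if j = i then 1 else 0"], rule exI[of _ 0])
     (auto simp: unitv_def)

lemma main_zbasis:
  assumes zb: "zbasis (NGbar r l k \<alpha> \<beta>) (us@bs)"
    and xs: "distinct xs" "set xs \<subseteq> {1..r-2}"
    and m: "m \<in> {1..r-2}" "m \<notin> set xs" "\<And>j. j \<in> {1..r-2} \<Longrightarrow> j \<notin> set xs \<Longrightarrow> j = m"
  shows "zbasis (NG r l k \<alpha> \<beta>) (us @ map unitv xs @ bs)"
proof -
  let ?E = "map unitv xs"
  let ?nu = "length us" and ?ne = "length xs"
  have BL: "set (us@bs) \<subseteq> Lsp r" and BN: "set (us@bs) \<subseteq> NG r l k \<alpha> \<beta>"
    using zb unfolding zbasis_def NGbar_def by auto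
  have xr: "\<forall>i\<in>set xs. i \<in> {1..r}"
  proof
    fix i assume "i \<in> set xs"
    then have "i \<in> {1..r-2}" using xs(2) by blast
    then show "i \<in> {1..r}" by auto
  qed
  have EN: "set ?E \<subseteq> NG r l k \<alpha> \<beta>" using xr by (auto intro!: unitv_NG)
  have ind: "\<And>c i. int_comb (us@bs) c = (\<lambda>_. 0) \<Longrightarrow> i < ?nu + length bs \<Longrightarrow> c i = 0"
    using zb unfolding zbasis_def by auto
  have span: "\<exists>c. x = int_comb (us@bs) c" if "x \<in> NGbar r l k \<alpha> \<beta>" for x
    using zb that unfolding zbasis_def by auto
  have A: "set (us @ ?E @ bs) \<subseteq> NG r l k \<alpha> \<beta>" using BN EN by auto
  have B: "\<exists>C. x = int_comb (us @ ?E @ bs) C" if x: "x \<in> NG r l k \<alpha> \<beta>" for x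
  proof -
    obtain z t where zt: "\<And>j. x j = (if j \<in> {1..r} then of_int (z j) + of_int t * gen_vec r k \<alpha> \<beta> j / real l else 0)"
      using x unfolding NG_def by blast
    define dd where "dd i = (of_int (z (xs!i) - z m) :: real)" for i
    define y where "y = (\<lambda>j. x j - lc ?E dd j)"
    have lcE: "lc ?E dd j = (if j \<in> set xs then of_int (z j - z m) else 0)" for j
    proof (cases "j \<in> set xs")
      case True
      then obtain i where i: "i < ?ne" "j = xs!i" by (auto simp: in_set_conv_nth)
      then show ?thesis using lc_unitv_at[OF xs(1) i(1), of dd] True by (simp add: dd_def)
    next
      case False then show ?thesis using lc_unitv_out[OF False] by simp
    qed
    have "y \<in> NG r l k \<alpha> \<beta>"
      unfolding NG_def
    proof (rule CollectI, rule exI[of _ "\<lambda>j. z j - (if j \<in> set xs then z j - z m else 0)"], rule exI[of _ t], rule allI)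
      fix j
      show "y j = (if j \<in> {1..r} then of_int (z j - (if j \<in> set xs then z j - z m else 0)) + of_int t * gen_vec r k \<alpha> \<beta> j / real l else 0)"
        using xs(2) unfolding y_def zt lcE by auto
    qed
    moreover have "y \<in> Lsp r"
    proof -
      have "y j = of_int (z m) + of_int t * real k / real l" if j: "j \<in> {1..r-2}" for j
      proof -
        have g: "gen_vec r k \<alpha> \<beta> j = real k" using j unfolding gen_vec_def by auto
        have jr: "j \<in> {1..r}" using j by auto
        show ?thesis
        proof (cases "j \<in> set xs")
          case True then show ?thesis unfolding y_def zt lcE using g jr by simp
        next
          case False then have "j = m" using m(3) j by blast
          then show ?thesis unfolding y_def zt lcE using g jr False by simp
        qed
      qed
      then show ?thesis unfolding Lsp_def by auto
    qed
    ultimately have "y \<in> NGbar r l k \<alpha> \<beta>" unfolding NGbar_def by auto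
    then obtain c where c: "y = int_comb (us@bs) c" using span by blast
    define C where "C i = (if i < ?nu then c i else if i < ?nu + ?ne then z (xs!(i - ?nu)) - z m else c (i - ?ne))" for i
    have "int_comb (us @ ?E @ bs) C = (\<lambda>j. lc us (\<lambda>i. of_int (C i)) j + (lc ?E (\<lambda>i. of_int (C (?nu + i))) j
         + lc bs (\<lambda>i. of_int (C (?nu + (?ne + i)))) j))"
      unfolding int_comb_lc lc_append by simp
    also have "lc us (\<lambda>i. of_int (C i)) = lc us (\<lambda>i. of_int (c i))" by (rule lc_cong) (simp add: C_def)
    also have "lc ?E (\<lambda>i. of_int (C (?nu + i))) = lc ?E dd" by (rule lc_cong) (simp add: C_def dd_def)
    also have "lc bs (\<lambda>i. of_int (C (?nu + (?ne + i)))) = lc bs (\<lambda>i. of_int (c (?nu + i)))" by (rule lc_cong) (simp add: C_def)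
    finally have "int_comb (us @ ?E @ bs) C = (\<lambda>j. y j + lc ?E dd j)"
      unfolding c int_comb_lc lc_append by (simp add: algebra_simps)
    then have "x = int_comb (us @ ?E @ bs) C" unfolding y_def by simp
    then show ?thesis by blast
  qed
  have C: "\<forall>i<length (us @ ?E @ bs). C i = 0" if C0: "int_comb (us @ ?E @ bs) C = (\<lambda>_. 0)" for C
  proof -
    define D where "D i = (if i < ?nu then C i else C (i + ?ne))" for i
    let ?v = "int_comb (us@bs) D"
    have v: "?v = (\<lambda>j. lc us (\<lambda>i. of_int (C i)) j + lc bs (\<lambda>i. of_int (C (?nu + (?ne + i)))) j)"
    proof -
      have "lc us (\<lambda>i. of_int (D i)) = lc us (\<lambda>i. of_int (C i))" by (rule lc_cong) (simp add: D_def)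
      moreover have "lc bs (\<lambda>i. of_int (D (?nu + i))) = lc bs (\<lambda>i. of_int (C (?nu + (?ne + i))))"
        by (rule lc_cong) (simp add: D_def algebra_simps)
      ultimately show ?thesis unfolding int_comb_lc lc_append by simp
    qed
    have vL: "?v \<in> Lsp r" unfolding int_comb_lc by (rule lc_in_L[OF BL])
    have sum0: "?v j + lc ?E (\<lambda>i. of_int (C (?nu + i))) j = 0" for j
    proof -
      have "lc us (\<lambda>i. of_int (C i)) j + (lc ?E (\<lambda>i. of_int (C (?nu + i))) j
         + lc bs (\<lambda>i. of_int (C (?nu + (?ne + i)))) j) = 0"
        using fun_cong[OF C0, of j] unfolding int_comb_lc lc_append by simp
      then show ?thesis using fun_cong[OF v, of j] by simp
    qed
    have Ez: "\<forall>i<?ne. of_int (C (?nu + i)) = (0::real)"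
      by (rule E_kill[OF vL m(1) m(2) xs(2) xs(1) sum0])
    then have "lc ?E (\<lambda>i. of_int (C (?nu + i))) = lc ?E (\<lambda>_. 0)" by (intro lc_cong) simp
    then have "?v = (\<lambda>_. 0)" using sum0 by (simp add: lc_zero fun_eq_iff)
    then have Dz: "\<And>i. i < ?nu + length bs \<Longrightarrow> D i = 0" using ind by blast
    show ?thesis
    proof (intro allI impI)
      fix i assume i: "i < length (us @ ?E @ bs)"
      show "C i = 0"
      proof (cases "i < ?nu")
        case True then show ?thesis using Dz[of i] by (simp add: D_def)
      next
        case F: False
        show ?thesis
        proof (cases "i < ?nu + ?ne")
          case True then show ?thesis using Ez F by (metis add_diff_inverse_nat add_less_cancel_left of_int_eq_0_iff)
        next
          case False
          then have h: "\<not> i - ?ne < ?nu" "i - ?ne + ?ne = i" "i - ?ne < ?nu + length bs" using i by auto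
          show ?thesis using Dz[OF h(3)] h(1,2) unfolding D_def by simp
        qed
      qed
    qed
  qed
  show ?thesis unfolding zbasis_def using A B C by blast
qed

theorem lemma6p6:
  fixes r l k \<alpha> \<beta> :: nat and n1 n2 n3 :: rvec
  assumes "r \<ge> 4" and "l \<ge> r"
    and "(\<alpha> + \<beta> + k * (r - 2)) mod l = 0"
    and "gcd (gcd k \<alpha>) l = 1" and "gcd (gcd k \<beta>) l = 1"
    and "n1 \<in> NGbar r l k \<alpha> \<beta> - {\<lambda>_. 0}"
    and "n2 \<in> NGbar r l k \<alpha> \<beta> - {\<lambda>_. 0}"
    and "n3 \<in> NGbar r l k \<alpha> \<beta> - {\<lambda>_. 0}"
    and "basic_cone_dim (NGbar r l k \<alpha> \<beta>) 3 [n1, n2, n3]"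
  shows "\<forall>\<xi>s::nat list. length \<xi>s = r - 3 \<and> sorted_wrt (<) \<xi>s \<and> set \<xi>s \<subseteq> {1..r-2}
     \<longrightarrow> basic_cone (NG r l k \<alpha> \<beta>) ([n1, n2, n3] @ map unitv \<xi>s)"
proof (intro allI impI)
  fix xs :: "nat list"
  assume H: "length xs = r - 3 \<and> sorted_wrt (<) xs \<and> set xs \<subseteq> {1..r-2}"
  have dist: "distinct xs" using H by (simp add: strict_sorted_iff)
  have sub: "set xs \<subseteq> {1..r-2}" using H by blast
  obtain us bs where us: "length us = 3" "pos_hull us = pos_hull [n1, n2, n3]"
    "real_lin_indep us" "zbasis (NGbar r l k \<alpha> \<beta>) (us @ bs)"
  proof -
    from assms(9) obtain us where u: "length us = 3" "pos_hull us = pos_hull [n1, n2, n3]"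
      "real_lin_indep us" "\<exists>bs. zbasis (NGbar r l k \<alpha> \<beta>) (us @ bs)"
      unfolding basic_cone_dim_def by blast
    from u(4) obtain bs where "zbasis (NGbar r l k \<alpha> \<beta>) (us @ bs)" by blast
    with u that show ?thesis by blast
  qed
  have cd1: "card ({1..r-2} - set xs) = card {1..r-2} - card (set xs)"
    using card_Diff_subset[OF finite_set sub] .
  have cd2: "card (set xs) = r - 3" using H dist distinct_card by metis
  have "card ({1..r-2} - set xs) = 1" unfolding cd1 cd2 using assms(1) by simp
  then obtain m where m: "{1..r-2} - set xs = {m}" by (rule card_1_singletonE)
  have "m \<in> {1..r-2} - set xs" unfolding m by simp
  then have m1: "m \<in> {1..r-2}" "m \<notin> set xs" by simp_all
  have m3: "j = m" if "j \<in> {1..r-2}" "j \<notin> set xs" for j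
  proof -
    have "j \<in> {1..r-2} - set xs" using that by simp
    then show ?thesis unfolding m by simp
  qed
  let ?E = "map unitv xs"
  have zb: "zbasis (NG r l k \<alpha> \<beta>) (us @ ?E @ bs)"
    by (rule main_zbasis[OF us(4) dist sub m1 m3])
  have BL: "set us \<subseteq> Lsp r" using us(4) unfolding zbasis_def NGbar_def by auto
  have ph: "pos_hull (us @ ?E) = pos_hull ([n1, n2, n3] @ ?E)"
    by (simp only: pos_hull_append us(2))
  have li: "real_lin_indep (us @ ?E)"
    unfolding real_lin_indep_def
  proof (intro allI impI)
    fix c i
    assume c0: "(\<lambda>j. \<Sum>i<length (us @ ?E). c i * ((us @ ?E) ! i) j) = (\<lambda>_. 0)"
      and i: "i < length (us @ ?E)"
    have c0': "lc (us @ ?E) c = (\<lambda>_. 0)" using c0 unfolding lc_def .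
    have s: "lc us c j + lc ?E (\<lambda>i. c (length us + i)) j = 0" for j
      using fun_cong[OF c0', of j] unfolding lc_append by simp
    have Ez: "\<forall>i<length xs. c (length us + i) = 0"
      by (rule E_kill[OF lc_in_L[OF BL] m1(1) m1(2) sub dist s])
    then have "lc ?E (\<lambda>i. c (length us + i)) = lc ?E (\<lambda>_. 0)" by (intro lc_cong) simp
    then have "lc us c = (\<lambda>_. 0)" using s by (simp add: lc_zero fun_eq_iff)
    then have uz: "\<forall>i<length us. c i = 0" using us(3) unfolding real_lin_indep_def lc_def by blast
    show "c i = 0"
    proof (cases "i < length us")
      case True then show ?thesis using uz by simp
    next
      case False
      then have h: "i - length us < length xs" "length us + (i - length us) = i" using i by auto
      have "c (length us + (i - length us)) = 0" using Ez h(1) by blast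
      then show ?thesis using h(2) by simp
    qed
  qed
  have pr: "\<forall>u\<in>set (us @ ?E). primitive (NG r l k \<alpha> \<beta>) u"
  proof
    fix u assume "u \<in> set (us @ ?E)"
    then have "u \<in> set (us @ ?E @ bs)" by auto
    then obtain i where "i < length (us @ ?E @ bs)" "u = (us @ ?E @ bs) ! i"
      unfolding in_set_conv_nth by blast
    then show "primitive (NG r l k \<alpha> \<beta>) u" using zbasis_primitive[OF zb] by simp
  qed
  show "basic_cone (NG r l k \<alpha> \<beta>) ([n1, n2, n3] @ ?E)"
    unfolding basic_cone_def basic_cone_dim_def
  proof (rule exI, rule exI[of _ "us @ ?E"], intro conjI)
    show "length (us @ ?E) = length (us @ ?E)" by (rule refl)
    show "\<exists>bs'. zbasis (NG r l k \<alpha> \<beta>) ((us @ ?E) @ bs')" using zb by (intro exI[of _ bs]) simp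
  qed (rule ph, rule li, rule pr)
qed

end
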